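(* Let $n\ge 2$, $1\le i\le n-1$, $0\le j\le n-1$, and let $G^*$ be a graph on $n$ vertices with at most one loop per vertex, with adjacency eigenvalues $\lambda_1\ge\cdots\ge\lambda_n$ and average degree $d$. If $\lambda_{i+1}-\lambda_{n-j}=\frac{n}{2}\sqrt{\frac{i+j+1}{i(j+1)}}$, then $\lambda_{i+1}\ge 0\ge\lambda_{n-j}$, $\lambda_1=d=\frac n2$, $\lambda_2=\cdots=\lambda_{i+1}=\frac n2\sqrt{\frac{j+1}{i(i+j+1)}}$, $\lambda_{n-j}=\cdots=\lambda_n=-\frac n2\sqrt{\frac{i}{(j+1)(i+j+1)}}$, and $\lambda_{i+2}=\cdots=\lambda_{n-j-1}=0$. *)

theory Defs
  imports "Jordan_Normal_Form.Char_Poly"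
begin

text \<open>A graph on vertex set {0..<n} with at most one loop per vertex (and no multiple
edges) is given by a symmetric adjacency relation E restricted to {0..<n}; E v v means
vertex v carries a loop.\<close>

definition loop_graph :: "nat \<Rightarrow> (nat \<Rightarrow> nat \<Rightarrow> bool) \<Rightarrow> bool" where
  "loop_graph n E \<longleftrightarrow> (\<forall>u v. E u v \<longrightarrow> u < n \<and> v < n) \<and> (\<forall>u v. E u v \<longrightarrow> E v u)"

definition adj_mat :: "nat \<Rightarrow> (nat \<Rightarrow> nat \<Rightarrow> bool) \<Rightarrow> real mat" where
  "adj_mat n E = mat n n (\<lambda>(u, v). if E u v then 1 else 0)"

text \<open>Average degree = (sum of all adjacency entries) / n (a loop contributes 1).\<close>
definition avg_degree :: "nat \<Rightarrow> (nat \<Rightarrow> nat \<Rightarrow> bool) \<Rightarrow> real" where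
  "avg_degree n E = (\<Sum>u<n. \<Sum>v<n. (adj_mat n E) $$ (u, v)) / real n"

text \<open>lam is the list of eigenvalues of A with multiplicity, in nonincreasing order
(lam ! 0 = lambda_1, ..., lam ! (n-1) = lambda_n).\<close>
definition sorted_eigenvalues :: "real mat \<Rightarrow> real list \<Rightarrow> bool" where
  "sorted_eigenvalues A lam \<longleftrightarrow> length lam = dim_row A \<and> sorted_wrt (\<ge>) lam \<and>
     char_poly A = (\<Prod>a\<leftarrow>lam. [:- a, 1:])"

end

theory Submission
  imports Defs "Jordan_Normal_Form.Schur_Decomposition"
begin


lemma cs_sum:
  fixes f :: "'a \<Rightarrow> real"
  assumes "finite I"
  shows "(\<Sum>i\<in>I. f i)^2 \<le> real (card I) * (\<Sum>i\<in>I. (f i)^2)"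
proof (cases "card I = 0")
  case True then show ?thesis using assms by simp
next
  case False
  define S where "S = (\<Sum>i\<in>I. f i)"
  define c where "c = real (card I)"
  have c0: "c > 0" using False c_def by simp
  have "0 \<le> (\<Sum>i\<in>I. (c * f i - S)^2)" by (rule sum_nonneg) simp
  also have "\<dots> = (\<Sum>i\<in>I. c^2 * (f i)^2 - 2 * c * S * f i + S^2)"
    by (rule sum.cong) (auto simp: power2_eq_square algebra_simps)
  also have "\<dots> = c^2 * (\<Sum>i\<in>I. (f i)^2) - 2 * c * S * S + c * S^2"
    by (simp add: sum.distrib sum_subtractf sum_distrib_left S_def c_def)
  also have "\<dots> = c * (c * (\<Sum>i\<in>I. (f i)^2) - S^2)"
    by (simp add: power2_eq_square algebra_simps)
  finally have "0 \<le> c * (\<Sum>i\<in>I. (f i)^2) - S^2"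
    using c0 by (simp add: zero_le_mult_iff)
  then show ?thesis unfolding S_def c_def by simp
qed

lemma mult_entry:
  fixes X Y :: "'a::semiring_0 mat"
  assumes "X \<in> carrier_mat n n" "Y \<in> carrier_mat n n" "u < n" "v < n"
  shows "(X * Y) $$ (u, v) = (\<Sum>w<n. X $$ (u, w) * Y $$ (w, v))"
  using assms by (auto simp: scalar_prod_def atLeast0LessThan intro!: sum.cong)

lemma pow_add_mat:
  fixes X :: "'a::semiring_1 mat"
  assumes "X \<in> carrier_mat n n"
  shows "X ^\<^sub>m (a + b) = X ^\<^sub>m a * X ^\<^sub>m b"
proof (induction b)
  case 0 then show ?case using assms by simp
next
  case (Suc b)
  have "X ^\<^sub>m (a + Suc b) = X ^\<^sub>m (a + b) * X" by simp
  also have "\<dots> = X ^\<^sub>m a * X ^\<^sub>m b * X" using Suc by simp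
  also have "\<dots> = X ^\<^sub>m a * (X ^\<^sub>m b * X)"
    using assms by (intro assoc_mult_mat) auto
  finally show ?case by simp
qed

lemma pow_comm_mat:
  fixes X :: "'a::semiring_1 mat"
  assumes "X \<in> carrier_mat n n"
  shows "X ^\<^sub>m k * X = X * X ^\<^sub>m k"
  using pow_add_mat[OF assms, of k 1] pow_add_mat[OF assms, of 1 k] assms by simp

lemma transpose_pow_mat:
  fixes X :: "'a::comm_semiring_1 mat"
  assumes "X \<in> carrier_mat n n"
  shows "transpose_mat (X ^\<^sub>m k) = (transpose_mat X) ^\<^sub>m k"
proof (induction k)
  case 0 then show ?case using assms by simp
next
  case (Suc k)
  have "transpose_mat (X ^\<^sub>m Suc k) = transpose_mat X * transpose_mat (X ^\<^sub>m k)"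
    using assms by (simp add: transpose_mult[of "X ^\<^sub>m k" n n X n])
  also have "\<dots> = transpose_mat X * (transpose_mat X) ^\<^sub>m k" using Suc by simp
  also have "\<dots> = (transpose_mat X) ^\<^sub>m k * transpose_mat X"
    using pow_comm_mat[of "transpose_mat X" n k] assms by simp
  finally show ?case by simp
qed

lemma sym_pow_mat:
  fixes X :: "'a::comm_semiring_1 mat"
  assumes "X \<in> carrier_mat n n" "transpose_mat X = X"
  shows "transpose_mat (X ^\<^sub>m k) = X ^\<^sub>m k"
  using transpose_pow_mat[OF assms(1)] assms(2) by simp

lemma nonneg_pow_mat:
  fixes X :: "real mat"
  assumes "X \<in> carrier_mat n n" "\<And>u v. u < n \<Longrightarrow> v < n \<Longrightarrow> X $$ (u,v) \<ge> 0"
  shows "u < n \<Longrightarrow> v < n \<Longrightarrow> (X ^\<^sub>m k) $$ (u,v) \<ge> 0"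
proof (induction k arbitrary: u v)
  case 0 then show ?case using assms by simp
next
  case (Suc k)
  have "(X ^\<^sub>m Suc k) $$ (u,v) = (\<Sum>w<n. (X ^\<^sub>m k) $$ (u, w) * X $$ (w, v))"
    using Suc.prems assms by (simp only: pow_mat.simps(2), intro mult_entry) auto
  also have "\<dots> \<ge> 0" using Suc assms by (intro sum_nonneg mult_nonneg_nonneg) auto
  finally show ?case .
qed

definition tr_mat :: "nat \<Rightarrow> real mat \<Rightarrow> real" where
  "tr_mat n X = (\<Sum>i<n. X $$ (i,i))"

definition sm_mat :: "nat \<Rightarrow> real mat \<Rightarrow> real" where
  "sm_mat n X = (\<Sum>u<n. \<Sum>v<n. X $$ (u,v))"

lemma tr_sim:
  fixes P X Q :: "real mat"
  assumes "P \<in> carrier_mat n n" "X \<in> carrier_mat n n" "Q \<in> carrier_mat n n" "Q * P = 1\<^sub>m n"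
  shows "tr_mat n (P * X * Q) = tr_mat n X"
proof -
  have qp: "(\<Sum>i<n. Q $$ (l, i) * P $$ (i, k)) = (if l = k then 1 else 0)" if "l < n" "k < n" for l k
  proof -
    have e1: "(Q * P) $$ (l, k) = (\<Sum>i<n. Q $$ (l, i) * P $$ (i, k))"
      by (rule mult_entry) (use assms that in auto)
    have e2: "(Q * P) $$ (l, k) = (if l = k then 1 else 0)"
      using assms that by simp
    show ?thesis using e1 e2 by simp
  qed
  have "tr_mat n (P * X * Q) = (\<Sum>i<n. \<Sum>l<n. (\<Sum>k<n. P $$ (i,k) * X $$ (k,l)) * Q $$ (l,i))"
    unfolding tr_mat_def
  proof (intro sum.cong refl)
    fix i assume i: "i \<in> {..<n}"
    have PX: "P * X \<in> carrier_mat n n" using assms by auto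
    have "(P * X * Q) $$ (i,i) = (\<Sum>l<n. (P * X) $$ (i,l) * Q $$ (l,i))"
      by (rule mult_entry[OF PX assms(3)]) (use i in auto)
    also have "\<dots> = (\<Sum>l<n. (\<Sum>k<n. P $$ (i,k) * X $$ (k,l)) * Q $$ (l,i))"
      by (intro sum.cong refl arg_cong2[where f="(*)"] mult_entry[OF assms(1,2)]) (use i in auto)
    finally show "(P * X * Q) $$ (i,i) = (\<Sum>l<n. (\<Sum>k<n. P $$ (i,k) * X $$ (k,l)) * Q $$ (l,i))" .
  qed
  also have "\<dots> = (\<Sum>i<n. \<Sum>l<n. \<Sum>k<n. X $$ (k,l) * (Q $$ (l,i) * P $$ (i,k)))"
    by (intro sum.cong refl) (subst sum_distrib_right, rule sum.cong, simp_all add: mult_ac)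
  also have "\<dots> = (\<Sum>l<n. \<Sum>k<n. \<Sum>i<n. X $$ (k,l) * (Q $$ (l,i) * P $$ (i,k)))"
    by (subst sum.swap) (rule sum.cong[OF refl], rule sum.swap)
  also have "\<dots> = (\<Sum>l<n. \<Sum>k<n. X $$ (k,l) * (if l = k then 1 else 0))"
    by (intro sum.cong refl) (simp add: sum_distrib_left[symmetric] qp)
  also have "\<dots> = tr_mat n X"
    unfolding tr_mat_def by (simp add: if_distrib sum.delta cong: if_cong)
  finally show ?thesis .
qed



lemma pow_tri:
  fixes X :: "real mat"
  assumes X: "X \<in> carrier_mat n n" and ut: "upper_triangular X"
  shows "upper_triangular (X ^\<^sub>m k) \<and> (\<forall>i<n. (X ^\<^sub>m k) $$ (i,i) = (X $$ (i,i)) ^ k)"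
proof (induction k)
  case 0 then show ?case using X by auto
next
  case (Suc k)
  have Xk: "X ^\<^sub>m k \<in> carrier_mat n n" using X by simp
  have z1: "(X ^\<^sub>m k) $$ (i,w) = 0" if "w < i" "i < n" for i w
    using Suc.IH that Xk by (auto elim: upper_triangularD)
  have z2: "X $$ (w,j) = 0" if "j < w" "w < n" for w j
    using ut that X by (auto elim: upper_triangularD)
  have e: "(X ^\<^sub>m Suc k) $$ (i,j) = (\<Sum>w<n. (X ^\<^sub>m k) $$ (i,w) * X $$ (w,j))"
    if "i < n" "j < n" for i j
    by (simp only: pow_mat.simps(2), rule mult_entry[OF Xk X that])
  have "upper_triangular (X ^\<^sub>m Suc k)"
  proof (rule upper_triangularI)
    fix i j assume ji: "j < i" and i: "i < dim_row (X ^\<^sub>m Suc k)"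
    then have i': "i < n" using X by simp
    have "(X ^\<^sub>m Suc k) $$ (i,j) = (\<Sum>w<n. (X ^\<^sub>m k) $$ (i,w) * X $$ (w,j))"
      using e[OF i'] ji i' by simp
    also have "\<dots> = 0"
    proof (rule sum.neutral, intro ballI)
      fix w assume "w \<in> {..<n}"
      then show "(X ^\<^sub>m k) $$ (i,w) * X $$ (w,j) = 0"
        using z1[of w i] z2[of j w] i' ji by (cases "w < i") auto
    qed
    finally show "(X ^\<^sub>m Suc k) $$ (i,j) = 0" .
  qed
  moreover have "(X ^\<^sub>m Suc k) $$ (i,i) = (X $$ (i,i)) ^ Suc k" if i: "i < n" for i
  proof -
    have "(X ^\<^sub>m Suc k) $$ (i,i) = (\<Sum>w<n. (X ^\<^sub>m k) $$ (i,w) * X $$ (w,i))"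
      using e[OF i i] .
    also have "\<dots> = (\<Sum>w<n. if w = i then (X ^\<^sub>m k) $$ (i,i) * X $$ (i,i) else 0)"
    proof (rule sum.cong[OF refl])
      fix w assume "w \<in> {..<n}"
      then show "(X ^\<^sub>m k) $$ (i,w) * X $$ (w,i) = (if w = i then (X ^\<^sub>m k) $$ (i,i) * X $$ (i,i) else 0)"
        using z1[of w i] z2[of i w] i by (cases "w < i"; cases "w = i") auto
    qed
    also have "\<dots> = (X ^\<^sub>m k) $$ (i,i) * X $$ (i,i)" using i by simp
    also have "\<dots> = (X $$ (i,i)) ^ Suc k" using Suc.IH i by simp
    finally show ?thesis .
  qed
  ultimately show ?case by blast
qed

lemma trace_pow_eig:
  fixes A :: "real mat"
  assumes A: "A \<in> carrier_mat n n" and cp: "char_poly A = (\<Prod>a\<leftarrow>lam. [:- a, 1:])"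
  shows "tr_mat n ((A + c \<cdot>\<^sub>m 1\<^sub>m n) ^\<^sub>m p) = (\<Sum>i<n. (lam ! i + c) ^ p)"
proof -
  obtain B P Q where sd: "schur_decomposition A lam = (B,P,Q)"
    by (cases "schur_decomposition A lam") auto
  from schur_decomposition[OF A cp sd]
  have sim: "similar_mat_wit A B P Q" and ut: "upper_triangular B" and dg: "diag_mat B = lam"
    by auto
  from similar_mat_witD2[OF A sim]
  have B: "B \<in> carrier_mat n n" and P: "P \<in> carrier_mat n n" and Q: "Q \<in> carrier_mat n n"
    and PQ: "P * Q = 1\<^sub>m n" and QP: "Q * P = 1\<^sub>m n" and APBQ: "A = P * B * Q" by auto
  define C where "C = B + c \<cdot>\<^sub>m 1\<^sub>m n"
  have C: "C \<in> carrier_mat n n" using B by (simp add: C_def)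
  have "P * C = P * B + c \<cdot>\<^sub>m P"
    unfolding C_def using P B by (simp add: mult_add_distrib_mat mult_smult_distrib[of P n n "1\<^sub>m n" n])
  then have "P * C * Q = (P * B + c \<cdot>\<^sub>m P) * Q" by simp
  also have "\<dots> = P * B * Q + c \<cdot>\<^sub>m (P * Q)"
    using P B Q by (simp add: add_mult_distrib_mat[of _ n n] mult_smult_assoc_mat)
  also have "\<dots> = A + c \<cdot>\<^sub>m 1\<^sub>m n" using APBQ PQ by simp
  finally have AC: "A + c \<cdot>\<^sub>m 1\<^sub>m n = P * C * Q" by simp
  have sim2: "similar_mat_wit (A + c \<cdot>\<^sub>m 1\<^sub>m n) C P Q"
    by (rule similar_mat_witI[OF PQ QP AC]) (use A C P Q in auto)
  have pw: "(A + c \<cdot>\<^sub>m 1\<^sub>m n) ^\<^sub>m p = P * C ^\<^sub>m p * Q"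
    by (rule similar_mat_wit_pow_id[OF sim2])
  have utC: "upper_triangular C"
    using ut B unfolding C_def by (auto intro!: upper_triangularI elim!: upper_triangularD)
  have len: "length lam = n" using dg B unfolding diag_mat_def by auto
  have Cii: "C $$ (i,i) = lam ! i + c" if "i < n" for i
    using that B dg unfolding C_def diag_mat_def by auto
  have "tr_mat n ((A + c \<cdot>\<^sub>m 1\<^sub>m n) ^\<^sub>m p) = tr_mat n (C ^\<^sub>m p)"
    unfolding pw by (rule tr_sim[OF P _ Q QP]) (use C in simp)
  also have "\<dots> = (\<Sum>i<n. (lam ! i + c) ^ p)"
    unfolding tr_mat_def using pow_tri[OF C utC, of p] Cii by simp
  finally show ?thesis .
qed



lemma symD: 
  fixes Y :: "real mat"
  assumes "Y \<in> carrier_mat n n" "transpose_mat Y = Y" "u < n" "v < n"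
  shows "Y $$ (u,v) = Y $$ (v,u)"
proof -
  have "transpose_mat Y $$ (u,v) = Y $$ (v,u)" using assms(1,3,4) by auto
  then show ?thesis using assms(2) by simp
qed

lemma sm_sq:
  fixes Y :: "real mat"
  assumes Y: "Y \<in> carrier_mat n n" and sy: "transpose_mat Y = Y"
  shows "(sm_mat n Y)^2 \<le> real n * sm_mat n (Y * Y)"
proof -
  define r where "r w = (\<Sum>v<n. Y $$ (w,v))" for w
  have "sm_mat n (Y * Y) = (\<Sum>u<n. \<Sum>v<n. \<Sum>w<n. Y $$ (u,w) * Y $$ (w,v))"
    unfolding sm_mat_def using Y by (intro sum.cong refl mult_entry) auto
  also have "\<dots> = (\<Sum>w<n. \<Sum>u<n. \<Sum>v<n. Y $$ (w,u) * Y $$ (w,v))"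
  proof -
    have "(\<Sum>u<n. \<Sum>v<n. \<Sum>w<n. Y $$ (u,w) * Y $$ (w,v)) = (\<Sum>u<n. \<Sum>v<n. \<Sum>w<n. Y $$ (w,u) * Y $$ (w,v))"
      by (intro sum.cong refl) (simp add: symD[OF Y sy])
    also have "\<dots> = (\<Sum>u<n. \<Sum>w<n. \<Sum>v<n. Y $$ (w,u) * Y $$ (w,v))"
      by (rule sum.cong[OF refl]) (rule sum.swap)
    also have "\<dots> = (\<Sum>w<n. \<Sum>u<n. \<Sum>v<n. Y $$ (w,u) * Y $$ (w,v))"
      by (rule sum.swap)
    finally show ?thesis .
  qed
  also have "\<dots> = (\<Sum>w<n. (r w)^2)"
    unfolding r_def power2_eq_square sum_product by simp
  finally have 1: "sm_mat n (Y * Y) = (\<Sum>w<n. (r w)^2)" .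
  have 2: "sm_mat n Y = (\<Sum>w<n. r w)" unfolding sm_mat_def r_def by simp
  show ?thesis unfolding 1 2 using cs_sum[of "{..<n}" r] by simp
qed

lemma tr_sq:
  fixes Y :: "real mat"
  assumes Y: "Y \<in> carrier_mat n n" and sy: "transpose_mat Y = Y"
  shows "(sm_mat n Y)^2 \<le> (real n)^2 * tr_mat n (Y * Y)"
proof -
  define a where "a u = (\<Sum>v<n. Y $$ (u,v))" for u
  have t: "tr_mat n (Y * Y) = (\<Sum>u<n. \<Sum>v<n. (Y $$ (u,v))^2)"
    unfolding tr_mat_def
  proof (intro sum.cong refl)
    fix u assume u: "u \<in> {..<n}"
    have "(Y * Y) $$ (u,u) = (\<Sum>v<n. Y $$ (u,v) * Y $$ (v,u))"
      by (rule mult_entry[OF Y Y]) (use u in auto)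
    also have "\<dots> = (\<Sum>v<n. (Y $$ (u,v))^2)"
      using u by (intro sum.cong refl) (simp add: symD[OF Y sy] power2_eq_square)
    finally show "(Y * Y) $$ (u,u) = (\<Sum>v<n. (Y $$ (u,v))^2)" .
  qed
  have "(sm_mat n Y)^2 = (\<Sum>u<n. a u)^2" unfolding sm_mat_def a_def by simp
  also have "\<dots> \<le> real n * (\<Sum>u<n. (a u)^2)" using cs_sum[of "{..<n}" a] by simp
  also have "\<dots> \<le> real n * (\<Sum>u<n. real n * (\<Sum>v<n. (Y $$ (u,v))^2))"
  proof (intro mult_left_mono sum_mono)
    fix u assume "u \<in> {..<n}"
    show "(a u)^2 \<le> real n * (\<Sum>v<n. (Y $$ (u,v))^2)"
      unfolding a_def using cs_sum[of "{..<n}" "\<lambda>v. Y $$ (u,v)"] by simp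
  qed simp
  also have "\<dots> = (real n)^2 * tr_mat n (Y * Y)"
    unfolding t by (simp add: sum_distrib_left power2_eq_square mult.assoc)
  finally show ?thesis .
qed

lemma growth_lim:
  fixes a b N :: real
  assumes "a \<ge> 0" "b \<ge> 0" "\<And>r. a ^ (2 ^ r) \<le> N * b ^ (2 ^ r)"
  shows "a \<le> b"
proof (rule ccontr)
  assume "\<not> a \<le> b"
  then have ab: "b < a" by simp
  show False
  proof (cases "b = 0")
    case True
    then show False using assms(3)[of 0] ab by simp
  next
    case False
    then have b0: "b > 0" using assms by simp
    define q where "q = a / b"
    have q1: "q > 1" using ab b0 by (simp add: q_def)
    obtain r :: nat where r: "N < real r * (q - 1)"
      using ex_less_of_nat_mult[of "q - 1" N] q1 by auto
    have "1 + real (2^r) * (q - 1) \<le> (1 + (q - 1)) ^ (2^r)"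
      by (rule Bernoulli_inequality) (use q1 in simp)
    then have B: "1 + real (2^r) * (q - 1) \<le> q ^ (2^r)" by simp
    have "real r \<le> real (2^r)" by (simp add: less_imp_le)
    then have "real r * (q - 1) \<le> real (2^r) * (q - 1)" using q1 by (intro mult_right_mono) auto
    then have "N < q ^ (2^r)" using r B by linarith
    moreover have "a ^ (2^r) = q ^ (2^r) * b ^ (2^r)"
      using b0 by (simp add: q_def power_divide)
    ultimately have "N * b ^ (2^r) < a ^ (2^r)" using b0 by simp
    then show False using assms(3)[of r] by simp
  qed
qed



lemma rayleigh_top:
  fixes A :: "real mat"
  assumes A: "A \<in> carrier_mat n n" and n: "n > 0" and sy: "transpose_mat A = A"
    and nn: "\<And>u v. u < n \<Longrightarrow> v < n \<Longrightarrow> A $$ (u,v) \<ge> 0"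
    and cp: "char_poly A = (\<Prod>a\<leftarrow>lam. [:- a, 1:])"
    and srt: "\<And>i. i < n \<Longrightarrow> lam ! i \<le> lam ! 0"
    and c: "c \<ge> 0" "\<And>i. i < n \<Longrightarrow> lam ! i + c \<ge> 0"
  shows "sm_mat n A / real n \<le> lam ! 0"
proof -
  define M where "M = A + c \<cdot>\<^sub>m 1\<^sub>m n"
  have M: "M \<in> carrier_mat n n" using A by (simp add: M_def)
  have Me: "M $$ (u,v) = A $$ (u,v) + (if u = v then c else 0)" if "u < n" "v < n" for u v
    using that A by (simp add: M_def)
  have Msy: "transpose_mat M = M"
    by (rule eq_matI) (use M in \<open>auto simp: Me symD[OF A sy]\<close>)
  have Mnn: "M $$ (u,v) \<ge> 0" if "u < n" "v < n" for u v
    using that nn c by (simp add: Me)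
  define a where "a = sm_mat n A / real n + c"
  have sA: "sm_mat n A \<ge> 0" unfolding sm_mat_def using nn by (intro sum_nonneg) auto
  have a0: "a \<ge> 0" using sA c n by (simp add: a_def)
  have sM: "sm_mat n M = real n * a"
  proof -
    have "sm_mat n M = (\<Sum>u<n. \<Sum>v<n. A $$ (u,v) + (if u = v then c else 0))"
      unfolding sm_mat_def by (intro sum.cong refl) (simp add: Me)
    also have "\<dots> = sm_mat n A + real n * c"
      unfolding sm_mat_def by (simp add: sum.distrib)
    finally show ?thesis using n by (simp add: a_def field_simps)
  qed
  have G: "sm_mat n (M ^\<^sub>m (2^r)) \<ge> real n * a ^ (2^r)" for r
  proof (induction r)
    case 0
    have "M ^\<^sub>m (2^0) = M" using M by simp
    then show ?case using sM by simp
  next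
    case (Suc r)
    define Y where "Y = M ^\<^sub>m (2^r)"
    have Y: "Y \<in> carrier_mat n n" using M by (simp add: Y_def)
    have Ysy: "transpose_mat Y = Y" unfolding Y_def by (rule sym_pow_mat[OF M Msy])
    have YY: "M ^\<^sub>m (2^Suc r) = Y * Y"
      unfolding Y_def using pow_add_mat[OF M, of "2^r" "2^r"] by (simp add: mult_2)
    have s0: "real n * a ^ (2^r) \<ge> 0" using a0 by simp
    have "(real n * a ^ (2^r))^2 \<le> (sm_mat n Y)^2"
      using Suc s0 unfolding Y_def by (intro power_mono) auto
    also have "\<dots> \<le> real n * sm_mat n (Y * Y)" by (rule sm_sq[OF Y Ysy])
    finally have "real n * (real n * a ^ (2 ^ Suc r)) \<le> real n * sm_mat n (Y * Y)"
      by (simp add: power2_eq_square power_add[symmetric] mult_2 algebra_simps)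
    then show ?case using n YY by simp
  qed
  define b where "b = lam ! 0 + c"
  have b0: "b \<ge> 0" using c(2)[of 0] n by (simp add: b_def)
  have H: "(a^2) ^ (2^r) \<le> real n * (b^2) ^ (2^r)" for r
  proof -
    define Y where "Y = M ^\<^sub>m (2^r)"
    have Y: "Y \<in> carrier_mat n n" using M by (simp add: Y_def)
    have Ysy: "transpose_mat Y = Y" unfolding Y_def by (rule sym_pow_mat[OF M Msy])
    have YY: "M ^\<^sub>m (2^Suc r) = Y * Y"
      unfolding Y_def using pow_add_mat[OF M, of "2^r" "2^r"] by (simp add: mult_2)
    have s0: "real n * a ^ (2^r) \<ge> 0" using a0 by simp
    have "(real n * a ^ (2^r))^2 \<le> (sm_mat n Y)^2"
      using G[of r] s0 unfolding Y_def by (intro power_mono) auto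
    also have "\<dots> \<le> (real n)^2 * tr_mat n (Y * Y)" by (rule tr_sq[OF Y Ysy])
    finally have 1: "(real n)^2 * (a^2) ^ (2^r) \<le> (real n)^2 * tr_mat n (Y * Y)"
      by (simp add: power_mult_distrib power_mult[symmetric] mult.commute)
    have 2: "(a^2) ^ (2^r) \<le> tr_mat n (Y * Y)"
      using 1 n by (simp add: mult_le_cancel_left)
    have "tr_mat n (Y * Y) = (\<Sum>i<n. (lam ! i + c) ^ (2^Suc r))"
      unfolding YY[symmetric] M_def by (rule trace_pow_eig[OF A cp])
    also have "\<dots> \<le> (\<Sum>i<n. b ^ (2^Suc r))"
      using srt c by (intro sum_mono power_mono) (auto simp: b_def)
    also have "\<dots> = real n * (b^2) ^ (2^r)"
      by (simp add: power_mult[symmetric] mult.commute)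
    finally show ?thesis using 2 by simp
  qed
  have "a^2 \<le> b^2" by (rule growth_lim[OF _ _ H]) auto
  then have "a \<le> b" using a0 b0 by (simp add: power2_le_iff_abs_le)
  then show ?thesis by (simp add: a_def b_def)
qed




lemma iden: fixes ii jj x y T K G :: real assumes ii: "ii \<ge> 1" and jj: "jj \<ge> 0"
  and "K = (ii + jj + 1) / (ii * (jj + 1))" "T = ii * x^2 + (jj + 1) * y^2"
  "G = ((jj + 1) * y - ii * x)^2 / (ii * (jj + 1))"
  shows "K * T - (x + y)^2 = G"
proof -
  have a: "ii > 0" "jj + 1 > 0" using ii jj by auto
  have "K * T * (ii * (jj+1)) = (ii + jj + 1) * (ii * x^2 + (jj + 1) * y^2)" using a assms(3,4) by simp
  moreover have "G * (ii * (jj+1)) = ((jj + 1) * y - ii * x)^2" using a assms(5) by simp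
  moreover have "(ii + jj + 1) * (ii * x^2 + (jj + 1) * y^2) - (x + y)^2 * (ii * (jj+1)) = ((jj + 1) * y - ii * x)^2"
    by (simp add: power2_eq_square algebra_simps)
  ultimately have "(K * T - (x + y)^2) * (ii * (jj+1)) = G * (ii * (jj+1))" by (simp add: algebra_simps)
  then show ?thesis using a by simp
qed

lemma solve: fixes ii jj x y R Q K nn :: real assumes ii: "ii \<ge> 1" and jj: "jj \<ge> 0"
  and K: "K = (ii + jj + 1) / (ii * (jj + 1))" and Q: "Q = nn^2/4" and R2: "R^2 = Q * K"
  and lin: "(jj + 1) * y = ii * x" and xy: "x + y = R" and x0: "x \<ge> 0" and y0: "y \<ge> 0" and nn: "nn > 0"
  shows "x = nn / 2 * sqrt ((jj + 1) / (ii * (ii + jj + 1)))"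
    "y = nn / 2 * sqrt (ii / ((jj + 1) * (ii + jj + 1)))"
proof -
  define s where "s = ii + jj + 1"
  have s0: "s > 0" using ii jj by (simp add: s_def)
  have "x * s = ii * x + (jj + 1) * x" by (simp add: s_def algebra_simps)
  also have "\<dots> = (jj + 1) * (x + y)" using lin by (simp add: algebra_simps)
  finally have xs: "x * s = (jj + 1) * R" using xy by simp
  have "y * s = (jj + 1) * y + ii * y" by (simp add: s_def algebra_simps)
  also have "\<dots> = ii * (x + y)" using lin by (simp add: algebra_simps)
  finally have ys: "y * s = ii * R" using xy by simp
  have K': "K * (ii * (jj + 1)) = s" using K ii jj by (simp add: s_def)
  have "x^2 * s^2 = (jj+1)^2 * (Q * K)" using xs R2 by (metis power_mult_distrib)
  then have "x^2 * s^2 * (ii * (jj+1)) = (jj+1)^2 * Q * (K * (ii * (jj+1)))" by (simp add: mult_ac)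
  then have "x^2 * s^2 * (ii * (jj+1)) = (jj+1)^2 * Q * s" using K' by simp
  then have "(x^2 * (ii * s)) * (s * (jj+1)) = ((jj+1) * Q) * (s * (jj+1))"
    by (simp add: power2_eq_square algebra_simps)
  then have "x^2 * (ii * s) = (jj+1) * Q" using s0 jj by simp
  then have x2: "x^2 = Q * ((jj + 1) / (ii * s))"
    using s0 ii by (subst times_divide_eq_right, subst nonzero_eq_divide_eq) auto
  have "y^2 * s^2 = ii^2 * (Q * K)" using ys R2 by (metis power_mult_distrib)
  then have "y^2 * s^2 * (ii * (jj+1)) = ii^2 * Q * (K * (ii * (jj+1)))" by (simp add: mult_ac)
  then have "y^2 * s^2 * (ii * (jj+1)) = ii^2 * Q * s" using K' by simp
  then have "(y^2 * ((jj + 1) * s)) * (s * ii) = (ii * Q) * (s * ii)"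
    by (simp add: power2_eq_square algebra_simps)
  then have "y^2 * ((jj + 1) * s) = ii * Q" using s0 ii by simp
  then have y2: "y^2 = Q * (ii / ((jj + 1) * s))"
    using s0 jj by (subst times_divide_eq_right, subst nonzero_eq_divide_eq) (auto simp: mult_ac)
  have "(nn / 2 * sqrt ((jj + 1) / (ii * s)))^2 = Q * ((jj + 1) / (ii * s))"
    using s0 ii jj by (simp add: Q power_mult_distrib power_divide)
  moreover have "nn / 2 * sqrt ((jj + 1) / (ii * s)) \<ge> 0" using nn ii jj s0 by simp
  ultimately show "x = nn / 2 * sqrt ((jj + 1) / (ii * (ii + jj + 1)))"
    using x2 x0 power2_eq_iff_nonneg unfolding s_def[symmetric] by metis
  have "(nn / 2 * sqrt (ii / ((jj + 1) * s)))^2 = Q * (ii / ((jj + 1) * s))"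
    using s0 ii jj by (simp add: Q power_mult_distrib power_divide)
  moreover have "nn / 2 * sqrt (ii / ((jj + 1) * s)) \<ge> 0" using nn ii jj s0 by simp
  ultimately show "y = nn / 2 * sqrt (ii / ((jj + 1) * (ii + jj + 1)))"
    using y2 y0 power2_eq_iff_nonneg unfolding s_def[symmetric] by metis
qed

lemma core:
  fixes ii jj nn x z d l0 S1 S2 S3 :: real
  assumes ii: "ii \<ge> 1" and jj: "jj \<ge> 0" and nn: "nn > 0"
    and R: "x - z = nn / 2 * sqrt ((ii + jj + 1) / (ii * (jj + 1)))"
    and l0: "l0 \<ge> d" "d \<ge> 0"
    and tot: "l0^2 + S1 + S2 + S3 = nn * d"
    and S2: "S2 \<ge> 0" and S1: "S1 \<ge> 0" and S3: "S3 \<ge> 0"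
    and S1x: "x \<ge> 0 \<Longrightarrow> S1 \<ge> ii * x^2"
    and S3z: "z \<le> 0 \<Longrightarrow> S3 \<ge> (jj + 1) * z^2"
  shows "x \<ge> 0 \<and> z \<le> 0 \<and> d = nn / 2 \<and> l0 = d \<and> S1 = ii * x^2 \<and> S3 = (jj + 1) * z^2 \<and> S2 = 0
    \<and> x = nn / 2 * sqrt ((jj + 1) / (ii * (ii + jj + 1)))
    \<and> z = - (nn / 2) * sqrt (ii / ((jj + 1) * (ii + jj + 1)))"
proof -
  define K where "K = (ii + jj + 1) / (ii * (jj + 1))"
  define Q where "Q = nn^2 / 4"
  define R where "R = nn / 2 * sqrt K"
  have Q0: "Q \<ge> 0" by (simp add: Q_def)
  have K0: "K > 0" using ii jj by (simp add: K_def)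
  have R0: "R > 0" using K0 nn by (simp add: R_def)
  have R2: "R^2 = Q * K" using K0 by (simp add: R_def Q_def power_mult_distrib power_divide less_imp_le)
  have xz: "x - z = R" using R by (simp add: R_def K_def)
  have l0sq: "l0^2 \<ge> d^2" using l0 by (intro power_mono) auto
  have Qd: "nn * d - d^2 = Q - (nn/2 - d)^2" by (simp add: Q_def power2_eq_square field_simps)
  have iK: "ii * K = (ii + jj + 1) / (jj + 1)" using ii by (simp add: K_def)
  have jK: "(jj + 1) * K = (ii + jj + 1) / ii" using jj by (simp add: K_def)
  have iK1: "ii * K \<ge> 1" unfolding iK using ii jj by simp
  have jK1: "(jj + 1) * K \<ge> 1" unfolding jK using ii jj by simp
  have x0: "x \<ge> 0"
  proof (rule ccontr)
    assume "\<not> x \<ge> 0"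
    then have zn: "z < 0" and zR: "-z > R" using xz R0 by auto
    have "(jj + 1) * z^2 \<le> S3" using S3z zn by simp
    also have "\<dots> \<le> nn * d - d^2" using tot l0sq S1 S2 by linarith
    also have "\<dots> \<le> Q" unfolding Qd by simp
    finally have a: "(jj + 1) * z^2 \<le> Q" .
    have "R^2 < (-z)^2" using zR R0 by (intro power_strict_mono) auto
    then have "Q * K < z^2" using R2 by simp
    then have "(jj + 1) * (Q * K) < (jj + 1) * z^2" using jj by simp
    moreover have "Q \<le> (jj + 1) * (Q * K)"
      using mult_left_mono[OF jK1 Q0] by (simp add: mult_ac)
    ultimately show False using a by linarith
  qed
  have z0: "z \<le> 0"
  proof (rule ccontr)
    assume "\<not> z \<le> 0"
    then have zp: "z > 0" and xR: "x > R" using xz R0 by auto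
    have "ii * x^2 \<le> S1" using S1x x0 by simp
    also have "\<dots> \<le> nn * d - d^2" using tot l0sq S3 S2 by linarith
    also have "\<dots> \<le> Q" unfolding Qd by simp
    finally have a: "ii * x^2 \<le> Q" .
    have "R^2 < x^2" using xR R0 by (intro power_strict_mono) auto
    then have "Q * K < x^2" using R2 by simp
    then have "ii * (Q * K) < ii * x^2" using ii by simp
    moreover have "Q \<le> ii * (Q * K)"
      using mult_left_mono[OF iK1 Q0] by (simp add: mult_ac)
    ultimately show False using a by linarith
  qed
  define y where "y = - z"
  have y0: "y \<ge> 0" using z0 by (simp add: y_def)
  define T where "T = ii * x^2 + (jj + 1) * y^2"
  define Z where "Z = (S1 - ii * x^2) + S2 + (S3 - (jj + 1) * z^2) + (l0^2 - d^2)"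
  have Z0: "Z \<ge> 0" unfolding Z_def using S1x[OF x0] S3z[OF z0] S2 l0sq by linarith
  have TZ: "T = Q - (nn/2 - d)^2 - Z"
    using tot Qd unfolding T_def Z_def y_def by (simp add: power2_eq_square)
  define G where "G = ((jj + 1) * y - ii * x)^2 / (ii * (jj + 1))"
  have G0: "G \<ge> 0" using ii jj by (simp add: G_def)
  have xy: "x + y = R" using xz by (simp add: y_def)
  have iden: "K * T - (x + y)^2 = G"
    by (rule iden[OF ii jj K_def T_def G_def])
  have "K * (Q - (nn/2 - d)^2 - Z) = Q * K + G" using iden xy R2 TZ by simp
  then have E: "K * ((nn/2 - d)^2 + Z) + G = 0" by (simp add: algebra_simps)
  have p1: "K * ((nn/2 - d)^2 + Z) \<ge> 0" using K0 Z0 by simp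
  have G00: "G = 0" using E p1 G0 by linarith
  have p2: "(nn/2 - d)^2 + Z = 0" using E G00 K0 by simp
  have "(nn/2 - d)^2 = 0" using p2 Z0 zero_le_power2[of "nn/2 - d"] by linarith
  then have dd: "d = nn / 2" by simp
  have Zz: "Z = 0" using p2 dd by simp
  have e1: "S1 = ii * x^2" and e2: "S2 = 0" and e3: "S3 = (jj + 1) * z^2" and e4: "l0^2 = d^2"
    using Zz S1x[OF x0] S3z[OF z0] S2 l0sq unfolding Z_def by linarith+
  have l0d: "l0 = d" using e4 l0 by (auto simp: power2_eq_iff)
  have lin: "(jj + 1) * y = ii * x" using G00 ii jj by (simp add: G_def)
  have Qdef: "Q = nn^2/4" by (simp add: Q_def)
  have sv: "x = nn / 2 * sqrt ((jj + 1) / (ii * (ii + jj + 1)))" "y = nn / 2 * sqrt (ii / ((jj + 1) * (ii + jj + 1)))"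
    by (rule solve[OF ii jj K_def Qdef R2 lin xy x0 y0 nn])+
  note xt = sv(1) and yt = sv(2)
  show ?thesis using x0 z0 dd l0d e1 e2 e3 xt yt by (simp add: y_def)
qed


theorem mainTheorem2:
  fixes n i j :: nat and E :: "nat \<Rightarrow> nat \<Rightarrow> bool" and lam :: "real list"
  assumes "n \<ge> 2" and "1 \<le> i" and "i \<le> n - 1" and "j \<le> n - 1"
    and "loop_graph n E"
    and "sorted_eigenvalues (adj_mat n E) lam"
    and "lam ! i - lam ! (n - j - 1) = real n / 2 * sqrt ((real i + real j + 1) / (real i * (real j + 1)))"
  shows "lam ! i \<ge> 0 \<and> 0 \<ge> lam ! (n - j - 1)
    \<and> lam ! 0 = avg_degree n E \<and> avg_degree n E = real n / 2
    \<and> (\<forall>k. 1 \<le> k \<and> k \<le> i \<longrightarrow>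
          lam ! k = real n / 2 * sqrt ((real j + 1) / (real i * (real i + real j + 1))))
    \<and> (\<forall>k. n - j - 1 \<le> k \<and> k \<le> n - 1 \<longrightarrow>
          lam ! k = - (real n / 2) * sqrt (real i / ((real j + 1) * (real i + real j + 1))))
    \<and> (\<forall>k. i + 1 \<le> k \<and> k < n - j - 1 \<longrightarrow> lam ! k = 0)"
proof -
  define A where "A = adj_mat n E"
  have n0: "n > 0" using assms(1) by simp
  have A: "A \<in> carrier_mat n n" by (simp add: A_def adj_mat_def)
  have Ae: "A $$ (u,v) = (if E u v then 1 else 0)" if "u < n" "v < n" for u v
    using that by (simp add: A_def adj_mat_def)
  have Esym: "E u v \<Longrightarrow> E v u" for u v using assms(5) unfolding loop_graph_def by blast
  have Asy: "transpose_mat A = A"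
    by (rule eq_matI) (use A in \<open>auto simp: Ae dest: Esym\<close>)
  have Ann: "A $$ (u,v) \<ge> 0" if "u < n" "v < n" for u v using that by (simp add: Ae)
  have Ale: "A $$ (u,v) \<le> 1" if "u < n" "v < n" for u v using that by (simp add: Ae)
  have len: "length lam = n" and srtw: "sorted_wrt (\<ge>) lam"
    and cp: "char_poly A = (\<Prod>a\<leftarrow>lam. [:- a, 1:])"
    using assms(6) A unfolding sorted_eigenvalues_def A_def by auto
  have srt: "lam ! l \<le> lam ! k" if "k \<le> l" "l < n" for k l
  proof (cases "k = l")
    case False
    then show ?thesis using srtw that len by (auto simp: sorted_wrt_iff_nth_less)
  qed simp
  have A0: "A + 0 \<cdot>\<^sub>m 1\<^sub>m n = A" by (rule eq_matI) (use A in auto)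
  have A2: "A ^\<^sub>m 2 = A * A" using A by (simp add: numeral_2_eq_2)
  have trA: "tr_mat n (A * A) = sm_mat n A"
    unfolding tr_mat_def sm_mat_def
  proof (intro sum.cong refl)
    fix u assume u: "u \<in> {..<n}"
    have "(A * A) $$ (u,u) = (\<Sum>v<n. A $$ (u,v) * A $$ (v,u))"
      by (rule mult_entry[OF A A]) (use u in auto)
    also have "\<dots> = (\<Sum>v<n. A $$ (u,v))"
      using u by (intro sum.cong refl) (auto simp: Ae dest: Esym)
    finally show "(A * A) $$ (u,u) = (\<Sum>v<n. A $$ (u,v))" .
  qed
  have sumsq: "(\<Sum>k<n. (lam ! k)^2) = sm_mat n A"
    using trace_pow_eig[OF A cp, of 0 2] unfolding A0 A2 trA by simp
  have avg: "avg_degree n E = sm_mat n A / real n"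
    by (simp add: avg_degree_def sm_mat_def A_def)
  have smle: "sm_mat n A \<le> (real n)^2"
  proof -
    have "sm_mat n A \<le> (\<Sum>u<n. \<Sum>v<n. (1::real))"
      unfolding sm_mat_def by (intro sum_mono) (auto simp: Ale)
    then show ?thesis by (simp add: power2_eq_square)
  qed
  have lamb: "lam ! k + real n \<ge> 0" if k: "k < n" for k
  proof -
    have "(lam ! k)^2 \<le> (\<Sum>k<n. (lam ! k)^2)"
      by (rule member_le_sum) (use k in auto)
    then have "(lam ! k)^2 \<le> (real n)^2" using sumsq smle by simp
    then have "\<bar>lam ! k\<bar> \<le> real n" by (simp add: power2_le_iff_abs_le)
    then show ?thesis by linarith
  qed
  have top: "sm_mat n A / real n \<le> lam ! 0"
    by (rule rayleigh_top[OF A n0 Asy Ann cp _ _ lamb]) (auto intro: srt)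
  define m where "m = n - j - 1"
  define R where "R = real n / 2 * sqrt ((real i + real j + 1) / (real i * (real j + 1)))"
  have R0: "R > 0" using n0 assms(2) by (simp add: R_def)
  have dif: "lam ! i - lam ! m = R" using assms(7) by (simp add: m_def R_def)
  have im: "i < m"
  proof (rule ccontr)
    assume "\<not> i < m"
    then have "lam ! i \<le> lam ! m" using srt[of m i] assms(3) n0 by simp
    then show False using dif R0 by simp
  qed
  have mn: "m < n" using im assms(3) m_def by simp
  have jm: "j + 1 = n - m" using m_def im by simp
  define f where "f k = (lam ! k)^2" for k
  have split: "(\<Sum>k<n. f k) = f 0 + (\<Sum>k\<in>{1..<i+1}. f k) + (\<Sum>k\<in>{i+1..<m}. f k) + (\<Sum>k\<in>{m..<n}. f k)"
  proof -
    have "(\<Sum>k<n. f k) = (\<Sum>k\<in>{0..<n}. f k)" by (simp add: lessThan_atLeast0)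
    also have "\<dots> = (\<Sum>k\<in>{0..<1}. f k) + (\<Sum>k\<in>{1..<n}. f k)"
      by (rule sum.atLeastLessThan_concat[symmetric]) (use n0 in auto)
    also have "(\<Sum>k\<in>{1..<n}. f k) = (\<Sum>k\<in>{1..<i+1}. f k) + (\<Sum>k\<in>{i+1..<n}. f k)"
      by (rule sum.atLeastLessThan_concat[symmetric]) (use im mn in auto)
    also have "(\<Sum>k\<in>{i+1..<n}. f k) = (\<Sum>k\<in>{i+1..<m}. f k) + (\<Sum>k\<in>{m..<n}. f k)"
      by (rule sum.atLeastLessThan_concat[symmetric]) (use im mn in auto)
    finally show ?thesis by simp
  qed
  define S1 where "S1 = (\<Sum>k\<in>{1..<i+1}. f k)"
  define S2 where "S2 = (\<Sum>k\<in>{i+1..<m}. f k)"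
  define S3 where "S3 = (\<Sum>k\<in>{m..<n}. f k)"
  define d where "d = sm_mat n A / real n"
  have dnn: "d \<ge> 0" unfolding d_def sm_mat_def using Ann by (intro divide_nonneg_nonneg sum_nonneg) auto
  have tot: "(lam ! 0)^2 + S1 + S2 + S3 = real n * d"
    using split sumsq n0 unfolding S1_def S2_def S3_def d_def f_def by simp
  have S1n: "S1 \<ge> 0" "S2 \<ge> 0" "S3 \<ge> 0" unfolding S1_def S2_def S3_def f_def
    by (rule sum_nonneg, simp)+
  have S1x: "S1 \<ge> real i * (lam ! i)^2" if x0: "lam ! i \<ge> 0"
  proof -
    have "real i * (lam ! i)^2 = (\<Sum>k\<in>{1..<i+1}. (lam ! i)^2)" by simp
    also have "\<dots> \<le> S1" unfolding S1_def f_def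
    proof (rule sum_mono)
      fix k assume "k \<in> {1..<i+1}"
      then have "k \<le> i" "i < n" using im mn by auto
      then have "lam ! i \<le> lam ! k" by (rule srt)
      then show "(lam ! i)^2 \<le> (lam ! k)^2" using x0 by (intro power_mono) auto
    qed
    finally show ?thesis .
  qed
  have rj: "real j + 1 = real (n - m)" using arg_cong[OF jm, of real] by simp
  have S3z: "S3 \<ge> (real j + 1) * (lam ! m)^2" if z0: "lam ! m \<le> 0"
  proof -
    have "(real j + 1) * (lam ! m)^2 = (\<Sum>k\<in>{m..<n}. (-lam ! m)^2)" unfolding rj by simp
    also have "\<dots> \<le> (\<Sum>k\<in>{m..<n}. (-lam ! k)^2)"
    proof (rule sum_mono)
      fix k assume "k \<in> {m..<n}"
      then have "m \<le> k" "k < n" by auto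
      then have "lam ! k \<le> lam ! m" by (rule srt)
      then show "(-lam ! m)^2 \<le> (-lam ! k)^2" using z0 by (intro power_mono) auto
    qed
    also have "\<dots> = S3" unfolding S3_def f_def by simp
    finally show ?thesis .
  qed
  have C: "lam ! i \<ge> 0 \<and> lam ! m \<le> 0 \<and> d = real n / 2 \<and> lam ! 0 = d \<and> S1 = real i * (lam ! i)^2
    \<and> S3 = (real j + 1) * (lam ! m)^2 \<and> S2 = 0
    \<and> lam ! i = real n / 2 * sqrt ((real j + 1) / (real i * (real i + real j + 1)))
    \<and> lam ! m = - (real n / 2) * sqrt (real i / ((real j + 1) * (real i + real j + 1)))"
    by (rule core[OF _ _ _ assms(7)[folded m_def] top[folded d_def] dnn tot S1n(2) S1n(1) S1n(3) S1x S3z])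
       (use assms(2) n0 in auto)
  have x0: "lam ! i \<ge> 0" and z0: "lam ! m \<le> 0" using C by auto
  have S1e: "S1 = real i * (lam ! i)^2" and S3e: "S3 = (real j + 1) * (lam ! m)^2" and S2e: "S2 = 0"
    using C by blast+
  have P1: "lam ! k = lam ! i" if "1 \<le> k" "k \<le> i" for k
  proof -
    have "(\<Sum>k\<in>{1..<i+1}. f k - (lam ! i)^2) = S1 - real i * (lam ! i)^2"
      unfolding S1_def by (simp add: sum_subtractf)
    then have z: "(\<Sum>k\<in>{1..<i+1}. f k - (lam ! i)^2) = 0" using S1e by linarith
    have nn: "\<forall>k\<in>{1..<i+1}. f k - (lam ! i)^2 \<ge> 0"
    proof
      fix k assume "k \<in> {1..<i+1}"
      then have "k \<le> i" "i < n" using im mn by auto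
      then have "lam ! i \<le> lam ! k" by (rule srt)
      then have "(lam ! i)^2 \<le> (lam ! k)^2" using x0 by (intro power_mono) auto
      then show "f k - (lam ! i)^2 \<ge> 0" unfolding f_def by simp
    qed
    have all0: "\<forall>k\<in>{1..<i+1}. f k - (lam ! i)^2 = 0"
      using sum_nonneg_eq_0_iff[of "{1..<i+1}" "\<lambda>k. f k - (lam ! i)^2"] z nn finite_atLeastLessThan by blast
    have "f k - (lam ! i)^2 = 0" using all0 that by auto
    moreover have "lam ! k \<ge> lam ! i" using that im mn by (intro srt) auto
    ultimately show ?thesis using x0 unfolding f_def by (auto simp: power2_eq_iff)
  qed
  have P3: "lam ! k = lam ! m" if "m \<le> k" "k < n" for k
  proof -
    have "(\<Sum>k\<in>{m..<n}. f k - (lam ! m)^2) = S3 - (real j + 1) * (lam ! m)^2"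
      unfolding S3_def rj by (simp add: sum_subtractf)
    then have z: "(\<Sum>k\<in>{m..<n}. f k - (lam ! m)^2) = 0" using S3e by linarith
    have nn: "\<forall>k\<in>{m..<n}. f k - (lam ! m)^2 \<ge> 0"
    proof
      fix k assume "k \<in> {m..<n}"
      then have "lam ! k \<le> lam ! m" by (intro srt) auto
      then have "-lam ! m \<le> -lam ! k" by simp
      then have "(-lam ! m)^2 \<le> (-lam ! k)^2" using z0 by (intro power_mono) auto
      then show "f k - (lam ! m)^2 \<ge> 0" unfolding f_def by simp
    qed
    have all0: "\<forall>k\<in>{m..<n}. f k - (lam ! m)^2 = 0"
      using sum_nonneg_eq_0_iff[of "{m..<n}" "\<lambda>k. f k - (lam ! m)^2"] z nn finite_atLeastLessThan by blast
    have "f k - (lam ! m)^2 = 0" using all0 that by auto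
    moreover have "lam ! k \<le> lam ! m" using that by (intro srt) auto
    ultimately show ?thesis using z0 unfolding f_def by (auto simp: power2_eq_iff)
  qed
  have P2: "lam ! k = 0" if "i + 1 \<le> k" "k < m" for k
  proof -
    have "\<forall>k\<in>{i+1..<m}. f k \<ge> 0" unfolding f_def by simp
    then have all0: "\<forall>k\<in>{i+1..<m}. f k = 0"
      using S2e sum_nonneg_eq_0_iff[of "{i+1..<m}" f] finite_atLeastLessThan unfolding S2_def by blast
    have "f k = 0" using all0 that by auto
    then show ?thesis unfolding f_def by simp
  qed
  have xe: "lam ! i = real n / 2 * sqrt ((real j + 1) / (real i * (real i + real j + 1)))"
    and ze: "lam ! m = - (real n / 2) * sqrt (real i / ((real j + 1) * (real i + real j + 1)))"
    and de: "d = real n / 2" and l0e: "lam ! 0 = d" using C by blast+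
  have c2: "0 \<ge> lam ! (n - j - 1)" using z0 unfolding m_def .
  have c3: "lam ! 0 = avg_degree n E" using l0e unfolding avg d_def .
  have c4: "avg_degree n E = real n / 2" using de unfolding avg d_def .
  have c5: "\<forall>k. 1 \<le> k \<and> k \<le> i \<longrightarrow>
          lam ! k = real n / 2 * sqrt ((real j + 1) / (real i * (real i + real j + 1)))"
  proof (intro allI impI)
    fix k assume "1 \<le> k \<and> k \<le> i"
    then have "lam ! k = lam ! i" using P1 by blast
    then show "lam ! k = real n / 2 * sqrt ((real j + 1) / (real i * (real i + real j + 1)))" using xe by simp
  qed
  have c6: "\<forall>k. n - j - 1 \<le> k \<and> k \<le> n - 1 \<longrightarrow>
          lam ! k = - (real n / 2) * sqrt (real i / ((real j + 1) * (real i + real j + 1)))"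
  proof (intro allI impI)
    fix k assume k: "n - j - 1 \<le> k \<and> k \<le> n - 1"
    then have "m \<le> k" "k < n" using n0 unfolding m_def by auto
    then have "lam ! k = lam ! m" by (rule P3)
    then show "lam ! k = - (real n / 2) * sqrt (real i / ((real j + 1) * (real i + real j + 1)))" using ze by simp
  qed
  have c7: "\<forall>k. i + 1 \<le> k \<and> k < n - j - 1 \<longrightarrow> lam ! k = 0"
  proof (intro allI impI)
    fix k assume k: "i + 1 \<le> k \<and> k < n - j - 1"
    then have "i + 1 \<le> k" "k < m" unfolding m_def by auto
    then show "lam ! k = 0" by (rule P2)
  qed
  show ?thesis using x0 c2 c3 c4 c5 c6 c7 by blast
qed


end
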